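(* Let $\mu\ge 2$ and $D\ge 1$ be integers, and let $(V,T)$ be the deterministic rooted tree of depth $D$ with root $v_o$ in which every node at depth less than $D$ has exactly $\mu$ children; let $L$ be its set of $\mu^D$ leaves and $V_d$ the set of nodes at depth $d$. Every leaf carries the same mark $F_x=\nu>0$, and $F_v:=\sum_{x\in L(v)}F_x$ for $v\in V$, where $L(v)$ is the set of leaves descended from $v$. Labels $\chi$ on $V$ are generated as follows: given $\rho_1,\dots,\rho_D\in[0,1]$, let $\{Z_u,u\ne v_o\}$ be independent Bernoulli variables with $\mathbf{E}[Z_u]=\rho_d$ for $u\in V_d$; the root gets label $0$; in order of increasing depth, a node with $Z_u=0$ copies its parent's label and a node with $Z_u=1$ gets a brand new label. Independently, each leaf $x$ is declared wild with probability $\omega\in[0,1]$ (independently over leaves), and tame otherwise. Let $(q_1,\dots,q_D)$ be a probability distribution on $\{1,\dots,D\}$. Edges are generated as follows: let $N$ be a nonnegative integer random variable with $\mathbf{E}[N]=\nu\mu^D/2$, independent of everything else. For each of $N$ independent attempts: draw a height $s\in\{1,\dots,D\}$ with probability $q_s$; choose a node $v\in V_{D-s}$ with probability $F_v/F_{v_o}$; run two independent random walks from $v$, each of which, at a non-leaf node $u$, moves to a child $u'$ with probability $F_{u'}/F_u$, until absorbed at leaves $x$ and $y$. The attempt produces an agreement multi-edge if $x\neq y$ and $\chi(x)=\chi(y)$, and a conflict multi-edge if $\chi(x)\ne\chi(y)$ and at least one of $x,y$ is wild. For $t=0,\dots,D-1$ put $A_t:=\prod_{d=D-t}^{D}(1-\rho_d)^2$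 and $C_t:=(1-A_t)\,\omega(2-\omega)$. Then the expected number $M_A$ of agreement multi-edges and the expected number $M_C$ of conflict multi-edges are exactly \[ M_A=\frac{\nu\mu^D(\mu-1)}{2}\sum_{s=1}^{D}q_s\mu^{-s}\sum_{t=0}^{s-1}A_t\mu^t,\qquad M_C=\frac{\nu\mu^D(\mu-1)}{2}\sum_{s=1}^{D}q_s\mu^{-s}\sum_{t=0}^{s-1}C_t\mu^t. \]
   Context: Depth is distance from the root; the height of a node at depth $d$ is $D-d$. All random ingredients (tree labels, wildness, $N$, heights, start nodes, walks) are independent of one another except as specified. *)

theory Defs
  imports "HOL-Probability.Probability"
begin

(* The complete mu-ary tree of depth D: nodes are lists of digits in {0..<mu}
  of length at most D; the root is the empty list; depth = length. *)

definition nodes :: "nat \<Rightarrow> nat \<Rightarrow> nat list set" where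
  "nodes D mu = {u. length u \<le> D \<and> set u \<subseteq> {0..<mu}}"

definition level :: "nat \<Rightarrow> nat \<Rightarrow> nat \<Rightarrow> nat list set" where
  "level D mu d = {u \<in> nodes D mu. length u = d}"

definition leaves :: "nat \<Rightarrow> nat \<Rightarrow> nat list set" where
  "leaves D mu = level D mu D"

definition children :: "nat \<Rightarrow> nat list \<Rightarrow> nat list set" where
  "children mu u = {u @ [i] | i. i < mu}"

definition leaves_below :: "nat \<Rightarrow> nat \<Rightarrow> nat list \<Rightarrow> nat list set" where
  "leaves_below D mu v = {x \<in> leaves D mu. \<exists>w. x = v @ w}"

definition Fmark :: "nat \<Rightarrow> nat \<Rightarrow> real \<Rightarrow> nat list \<Rightarrow> real" where
  "Fmark D mu nu v = (\<Sum>x\<in>leaves_below D mu v. nu)"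

(* Labels: the root gets label [] (playing the role of label 0); a node u with
  Z u = 1 gets the brand new label u (its own name, distinct from all other labels);
  a node with Z u = 0 copies its parent's label. *)
function label :: "(nat list \<Rightarrow> bool) \<Rightarrow> nat list \<Rightarrow> nat list" where
  "label Z u = (if u = [] then [] else if Z u then u else label Z (butlast u))"
  by auto
termination by (relation "Wellfounded.measure (length \<circ> snd)") auto

declare label.simps[simp del]

definition Z_pmf :: "nat \<Rightarrow> nat \<Rightarrow> (nat \<Rightarrow> real) \<Rightarrow> (nat list \<Rightarrow> bool) pmf" where
  "Z_pmf D mu rho = Pi_pmf (nodes D mu - {[]}) False (\<lambda>u. bernoulli_pmf (rho (length u)))"

definition W_pmf :: "nat \<Rightarrow> nat \<Rightarrow> real \<Rightarrow> (nat list \<Rightarrow> bool) pmf" where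
  "W_pmf D mu omega = Pi_pmf (leaves D mu) False (\<lambda>_. bernoulli_pmf omega)"

definition step_pmf :: "nat \<Rightarrow> nat \<Rightarrow> real \<Rightarrow> nat list \<Rightarrow> nat list pmf" where
  "step_pmf D mu nu u =
     embed_pmf (\<lambda>w. if w \<in> children mu u then Fmark D mu nu w / Fmark D mu nu u else 0)"

primrec walk_steps :: "nat \<Rightarrow> nat \<Rightarrow> real \<Rightarrow> nat \<Rightarrow> nat list \<Rightarrow> nat list pmf" where
  "walk_steps D mu nu 0 u = return_pmf u"
| "walk_steps D mu nu (Suc k) u = bind_pmf (step_pmf D mu nu u) (walk_steps D mu nu k)"

definition walk_pmf :: "nat \<Rightarrow> nat \<Rightarrow> real \<Rightarrow> nat list \<Rightarrow> nat list pmf" where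
  "walk_pmf D mu nu v = walk_steps D mu nu (D - length v) v"

definition height_pmf :: "nat \<Rightarrow> (nat \<Rightarrow> real) \<Rightarrow> nat pmf" where
  "height_pmf D q = embed_pmf (\<lambda>s. if s \<in> {1..D} then q s else 0)"

definition start_pmf :: "nat \<Rightarrow> nat \<Rightarrow> real \<Rightarrow> nat \<Rightarrow> nat list pmf" where
  "start_pmf D mu nu s =
     embed_pmf (\<lambda>v. if v \<in> level D mu (D - s) then Fmark D mu nu v / Fmark D mu nu [] else 0)"

definition attempt_pmf :: "nat \<Rightarrow> nat \<Rightarrow> real \<Rightarrow> (nat \<Rightarrow> real) \<Rightarrow> (nat list \<times> nat list) pmf" where
  "attempt_pmf D mu nu q =
     bind_pmf (height_pmf D q) (\<lambda>s.
     bind_pmf (start_pmf D mu nu s) (\<lambda>v.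
     bind_pmf (walk_pmf D mu nu v) (\<lambda>x.
     bind_pmf (walk_pmf D mu nu v) (\<lambda>y. return_pmf (x, y)))))"

primrec attempts_pmf :: "nat \<Rightarrow> nat \<Rightarrow> real \<Rightarrow> (nat \<Rightarrow> real) \<Rightarrow> nat \<Rightarrow> (nat list \<times> nat list) list pmf" where
  "attempts_pmf D mu nu q 0 = return_pmf []"
| "attempts_pmf D mu nu q (Suc n) =
     bind_pmf (attempt_pmf D mu nu q) (\<lambda>a. map_pmf (Cons a) (attempts_pmf D mu nu q n))"

definition is_agreement :: "(nat list \<Rightarrow> bool) \<Rightarrow> nat list \<times> nat list \<Rightarrow> bool" where
  "is_agreement Z a = (fst a \<noteq> snd a \<and> label Z (fst a) = label Z (snd a))"

definition is_conflict :: "(nat list \<Rightarrow> bool) \<Rightarrow> (nat list \<Rightarrow> bool) \<Rightarrow> nat list \<times> nat list \<Rightarrow> bool" where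
  "is_conflict Z W a = (label Z (fst a) \<noteq> label Z (snd a) \<and> (W (fst a) \<or> W (snd a)))"

definition edge_experiment :: "nat \<Rightarrow> nat \<Rightarrow> real \<Rightarrow> (nat \<Rightarrow> real) \<Rightarrow> real \<Rightarrow> (nat \<Rightarrow> real)
     \<Rightarrow> nat pmf \<Rightarrow> (nat \<times> nat) pmf" where
  "edge_experiment D mu nu rho omega q N =
     bind_pmf N (\<lambda>n.
     bind_pmf (Z_pmf D mu rho) (\<lambda>Z.
     bind_pmf (W_pmf D mu omega) (\<lambda>W.
     map_pmf (\<lambda>es. (length (filter (is_agreement Z) es), length (filter (is_conflict Z W) es)))
       (attempts_pmf D mu nu q n))))"

definition A_coef :: "nat \<Rightarrow> (nat \<Rightarrow> real) \<Rightarrow> nat \<Rightarrow> real" where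
  "A_coef D rho t = (\<Prod>d = D - t..D. (1 - rho d)^2)"

definition C_coef :: "nat \<Rightarrow> (nat \<Rightarrow> real) \<Rightarrow> real \<Rightarrow> nat \<Rightarrow> real" where
  "C_coef D rho omega t = (1 - A_coef D rho t) * omega * (2 - omega)"

end

theory Submission
  imports Defs
begin


lemma pmf_integrable_bdd:
  fixes f :: "'a \<Rightarrow> real"
  assumes "\<And>x. x \<in> set_pmf M \<Longrightarrow> \<bar>f x\<bar> \<le> B"
  shows "integrable (measure_pmf M) f"
  by (rule measure_pmf.integrable_const_bound[where B=B]) (auto simp: AE_measure_pmf_iff assms)

lemma int_bind_bdd:
  fixes f :: "'b \<Rightarrow> real"
  assumes "\<And>y. y \<in> set_pmf (bind_pmf M N) \<Longrightarrow> \<bar>f y\<bar> \<le> B"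
  shows "measure_pmf.expectation (bind_pmf M N) f =
         measure_pmf.expectation M (\<lambda>x. measure_pmf.expectation (N x) f)"
proof -
  define g where "g y = (if y \<in> set_pmf (bind_pmf M N) then f y else 0)" for y
  have gb: "\<bar>g y\<bar> \<le> max B 0" for y
    unfolding g_def using assms[of y] by (auto simp: le_max_iff_disj)
  have "measure_pmf.expectation (bind_pmf M N) g =
        measure_pmf.expectation M (\<lambda>x. measure_pmf.expectation (N x) g)"
    using measurable_measure_pmf[of N] unfolding measure_pmf_bind
    by (intro integral_bind[where K="count_space UNIV" and B="max B 0" and B'=1]) (auto simp: gb)
  moreover have "measure_pmf.expectation (bind_pmf M N) g = measure_pmf.expectation (bind_pmf M N) f"
    by (intro integral_cong_AE) (auto simp: AE_measure_pmf_iff g_def)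
  moreover have "measure_pmf.expectation M (\<lambda>x. measure_pmf.expectation (N x) g) =
      measure_pmf.expectation M (\<lambda>x. measure_pmf.expectation (N x) f)"
    by (intro integral_cong_AE) (auto simp: AE_measure_pmf_iff g_def intro!: integral_cong_AE)
  ultimately show ?thesis by simp
qed

lemma int_return: "measure_pmf.expectation (return_pmf x) f = (f x :: real)"
  by simp

lemma int_swap:
  fixes f :: "'a \<Rightarrow> 'b \<Rightarrow> real"
  assumes "\<And>x y. \<bar>f x y\<bar> \<le> B"
  shows "measure_pmf.expectation M (\<lambda>x. measure_pmf.expectation N (\<lambda>y. f x y)) =
         measure_pmf.expectation N (\<lambda>y. measure_pmf.expectation M (\<lambda>x. f x y))"
proof -
  have inner: "measure_pmf.expectation (bind_pmf N (\<lambda>y. return_pmf (x,y))) (case_prod f)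
     = measure_pmf.expectation N (\<lambda>y. f x y)" for x
    by (subst int_bind_bdd[where B=B]) (use assms in auto)
  have inner2: "measure_pmf.expectation (bind_pmf M (\<lambda>x. return_pmf (x,y))) (case_prod f)
     = measure_pmf.expectation M (\<lambda>x. f x y)" for y
    by (subst int_bind_bdd[where B=B]) (use assms in auto)
  have "measure_pmf.expectation M (\<lambda>x. measure_pmf.expectation N (\<lambda>y. f x y)) =
        measure_pmf.expectation (bind_pmf M (\<lambda>x. bind_pmf N (\<lambda>y. return_pmf (x,y)))) (case_prod f)"
    by (subst int_bind_bdd[where B=B]) (use assms in \<open>auto simp: inner\<close>)
  also have "\<dots> = measure_pmf.expectation (bind_pmf N (\<lambda>y. bind_pmf M (\<lambda>x. return_pmf (x,y)))) (case_prod f)"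
    by (subst bind_commute_pmf) simp
  also have "\<dots> = measure_pmf.expectation N (\<lambda>y. measure_pmf.expectation M (\<lambda>x. f x y))"
    by (subst int_bind_bdd[where B=B]) (use assms in \<open>auto simp: inner2\<close>)
  finally show ?thesis .
qed

lemma exp_of_bool:
  "measure_pmf.expectation M (\<lambda>x. of_bool (P x) :: real) = measure_pmf.prob M {x. P x}"
proof -
  have "(\<lambda>x. of_bool (P x) :: real) = indicator {x. P x}" by (auto simp: indicator_def)
  then show ?thesis by (simp add: measure_pmf.emeasure_finite)
qed



lemma leaves_below_eq:
  assumes "set v \<subseteq> {0..<mu}" "length v \<le> D"
  shows "leaves_below D mu v = (\<lambda>w. v @ w) ` {w. set w \<subseteq> {0..<mu} \<and> length w = D - length v}"
  using assms by (auto simp: leaves_below_def leaves_def level_def nodes_def subset_iff)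

lemma Fmark_eq:
  assumes "set v \<subseteq> {0..<mu}" "length v \<le> D"
  shows "Fmark D mu nu v = nu * real mu ^ (D - length v)"
proof -
  have "card (leaves_below D mu v) = mu ^ (D - length v)"
    unfolding leaves_below_eq[OF assms]
    by (subst card_image) (auto simp: inj_on_def card_lists_length_eq)
  then show ?thesis by (simp add: Fmark_def)
qed

lemma embed_pmf_eqI:
  assumes "\<And>x. f x = pmf p x"
  shows "embed_pmf f = p"
proof -
  have "f = pmf p" using assms by auto
  then show ?thesis using type_definition.Rep_inverse[OF td_pmf_embed_pmf] by simp
qed

lemma step_pmf_eq:
  assumes "set u \<subseteq> {0..<mu}" "length u < D" "mu > 0" "nu > 0"
  shows "step_pmf D mu nu u = map_pmf (\<lambda>i. u @ [i]) (pmf_of_set {0..<mu})"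
  unfolding step_pmf_def
proof (rule embed_pmf_eqI)
  fix w
  show "(if w \<in> children mu u then Fmark D mu nu w / Fmark D mu nu u else 0) =
        pmf (map_pmf (\<lambda>i. u @ [i]) (pmf_of_set {0..<mu})) w"
  proof (cases "w \<in> children mu u")
    case True
    then obtain i where i: "i < mu" "w = u @ [i]" by (auto simp: children_def)
    have inj: "inj (\<lambda>i. u @ [i])" by (auto simp: inj_def)
    have "Fmark D mu nu w = nu * real mu ^ (D - length u - 1)"
      using Fmark_eq[of w mu D nu] assms i by auto
    moreover have "Fmark D mu nu u = nu * real mu ^ (D - length u)"
      using Fmark_eq[of u mu D nu] assms by auto
    moreover have "real mu ^ (D - length u) = real mu * real mu ^ (D - length u - 1)"
      using assms by (simp flip: power_Suc add: Suc_diff_Suc)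
    ultimately show ?thesis using True i assms
      by (simp add: pmf_map_inj'[OF inj] indicator_def)
  next
    case False
    then have "w \<notin> set_pmf (map_pmf (\<lambda>i. u @ [i]) (pmf_of_set {0..<mu}))"
      using assms by (auto simp: children_def)
    then show ?thesis using False by (simp add: set_pmf_eq)
  qed
qed

primrec ulist :: "nat \<Rightarrow> nat \<Rightarrow> nat list pmf" where
  "ulist mu 0 = return_pmf []"
| "ulist mu (Suc k) = bind_pmf (pmf_of_set {0..<mu}) (\<lambda>i. map_pmf (Cons i) (ulist mu k))"

lemma set_ulist:
  assumes "mu > 0"
  shows "w \<in> set_pmf (ulist mu k) \<Longrightarrow> length w = k \<and> set w \<subseteq> {0..<mu}"
  using assms by (induction k arbitrary: w) (auto simp: subset_iff)

lemma walk_steps_eq: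
  assumes "mu > 0" "nu > 0"
  shows "set u \<subseteq> {0..<mu} \<Longrightarrow> length u + k \<le> D \<Longrightarrow>
    walk_steps D mu nu k u = map_pmf (\<lambda>w. u @ w) (ulist mu k)"
proof (induction k arbitrary: u)
  case 0
  then show ?case by simp
next
  case (Suc k)
  have "walk_steps D mu nu (Suc k) u =
     bind_pmf (pmf_of_set {0..<mu}) (\<lambda>i. walk_steps D mu nu k (u @ [i]))"
    using Suc.prems assms by (simp add: step_pmf_eq bind_map_pmf)
  also have "\<dots> = bind_pmf (pmf_of_set {0..<mu}) (\<lambda>i. map_pmf (\<lambda>w. (u @ [i]) @ w) (ulist mu k))"
    using Suc.prems assms by (intro bind_pmf_cong refl Suc.IH) auto
  also have "\<dots> = map_pmf (\<lambda>w. u @ w) (ulist mu (Suc k))"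
    by (simp add: map_bind_pmf pmf.map_comp o_def)
  finally show ?case .
qed

lemma start_pmf_eq:
  assumes "mu > 0" "nu > 0" "s \<le> D"
  shows "start_pmf D mu nu s = pmf_of_set (level D mu (D - s))"
  unfolding start_pmf_def
proof (rule embed_pmf_eqI)
  have lev: "level D mu (D - s) = {w. set w \<subseteq> {0..<mu} \<and> length w = D - s}"
    by (auto simp: level_def nodes_def)
  have card: "card (level D mu (D - s)) = mu ^ (D - s)"
    unfolding lev by (simp add: card_lists_length_eq)
  have fin: "finite (level D mu (D - s))" unfolding lev by (simp add: finite_lists_length_eq)
  have ne: "level D mu (D - s) \<noteq> {}" using card assms by auto
  fix v
  show "(if v \<in> level D mu (D - s) then Fmark D mu nu v / Fmark D mu nu [] else 0) =
        pmf (pmf_of_set (level D mu (D - s))) v"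
  proof (cases "v \<in> level D mu (D - s)")
    case True
    then have v: "set v \<subseteq> {0..<mu}" "length v = D - s" by (auto simp: lev)
    have "Fmark D mu nu v = nu * real mu ^ s" using Fmark_eq[of v mu D nu] v assms by auto
    moreover have "Fmark D mu nu [] = nu * real mu ^ D" using Fmark_eq[of "[]" mu D nu] by auto
    moreover have "real mu ^ D = real mu ^ s * real mu ^ (D - s)"
      using assms by (simp flip: power_add)
    ultimately show ?thesis using True fin ne card assms by simp
  next
    case False
    then show ?thesis using fin ne by simp
  qed
qed

lemma height_pmf_pmf:
  assumes "\<And>s. s \<in> {1..D} \<Longrightarrow> 0 \<le> q s" "(\<Sum>s = 1..D. q s) = 1"
  shows "pmf (height_pmf D q) s = (if s \<in> {1..D} then q s else 0)"
  unfolding height_pmf_def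
proof (rule pmf_embed_pmf)
  show "0 \<le> (if x \<in> {1..D} then q x else 0)" for x using assms by auto
  have "(\<integral>\<^sup>+ x. ennreal (if x \<in> {1..D} then q x else 0) \<partial>count_space UNIV) =
        (\<Sum>x\<in>{1..D}. ennreal (if x \<in> {1..D} then q x else 0))"
    by (rule nn_integral_count_space') auto
  also have "\<dots> = ennreal (\<Sum>x\<in>{1..D}. q x)"
    using assms by (subst sum_ennreal) auto
  finally show "(\<integral>\<^sup>+ x. ennreal (if x \<in> {1..D} then q x else 0) \<partial>count_space UNIV) = 1"
    using assms by simp
qed



lemma label_prefix: "\<exists>w. x = label Z x @ w"
proof (induction Z x rule: label.induct)
  case (1 Z u)
  show ?case
  proof (cases "u = []")
    case True then show ?thesis by (simp add: label.simps)
  next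
    case False
    show ?thesis
    proof (cases "Z u")
      case True then show ?thesis using False by (simp add: label.simps)
    next
      case nz: False
      then obtain w where "butlast u = label Z (butlast u) @ w" using 1 False by auto
      then have "u = label Z (butlast u) @ (w @ [last u])"
        using False by (metis append_assoc append_butlast_last_id)
      then show ?thesis using False nz by (subst label.simps) auto
    qed
  qed
qed

lemma label_len_ge: "1 \<le> k \<Longrightarrow> k \<le> length x \<Longrightarrow> Z (take k x) \<Longrightarrow> k \<le> length (label Z x)"
proof (induction Z x rule: label.induct)
  case (1 Z u)
  show ?case
  proof (cases "Z u")
    case True then show ?thesis using 1 by (subst label.simps) auto
  next
    case nz: False
    have ne: "u \<noteq> []" using 1 by auto
    have "k \<noteq> length u" using nz 1 by auto
    then have "k \<le> length (butlast u)" using 1 by auto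
    moreover have "take k (butlast u) = take k u" using \<open>k \<le> length (butlast u)\<close>
      by (simp add: butlast_conv_take)
    ultimately have "k \<le> length (label Z (butlast u))" using 1 ne nz by auto
    then show ?thesis using ne nz by (subst label.simps) auto
  qed
qed

lemma label_skip: "c \<le> length x \<Longrightarrow> (\<forall>k. c < k \<and> k \<le> length x \<longrightarrow> \<not> Z (take k x)) \<Longrightarrow>
   label Z x = label Z (take c x)"
proof (induction Z x rule: label.induct)
  case (1 Z u)
  show ?case
  proof (cases "c = length u")
    case True then show ?thesis by simp
  next
    case False
    then have lt: "c < length u" using 1 by auto
    then have ne: "u \<noteq> []" by auto
    have nz: "\<not> Z u" using 1(3)[rule_format, of "length u"] lt by auto
    have "c \<le> length (butlast u)" using lt by auto
    moreover have "\<forall>k. c < k \<and> k \<le> length (butlast u) \<longrightarrow> \<not> Z (take k (butlast u))"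
      using 1(3) by (auto simp: butlast_conv_take)
    ultimately have "label Z (butlast u) = label Z (take c (butlast u))" using 1 ne nz by auto
    moreover have "take c (butlast u) = take c u" using lt by (simp add: butlast_conv_take)
    ultimately show ?thesis using ne nz by (subst label.simps) auto
  qed
qed

lemma label_eq_iff:
  assumes "i \<noteq> j" "x = p @ i # a" "y = p @ j # b"
  shows "label Z x = label Z y \<longleftrightarrow>
    (\<forall>k. length p < k \<and> k \<le> length x \<longrightarrow> \<not> Z (take k x)) \<and>
    (\<forall>k. length p < k \<and> k \<le> length y \<longrightarrow> \<not> Z (take k y))"
proof
  assume h: "(\<forall>k. length p < k \<and> k \<le> length x \<longrightarrow> \<not> Z (take k x)) \<and>
    (\<forall>k. length p < k \<and> k \<le> length y \<longrightarrow> \<not> Z (take k y))"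
  have "label Z x = label Z (take (length p) x)" using h assms by (intro label_skip) auto
  moreover have "label Z y = label Z (take (length p) y)" using h assms by (intro label_skip) auto
  ultimately show "label Z x = label Z y" using assms by simp
next
  assume eq: "label Z x = label Z y"
  obtain wx where wx: "x = label Z x @ wx" using label_prefix by blast
  obtain wy where wy: "y = label Z y @ wy" using label_prefix by blast
  have key: False if k: "length p < k" "k \<le> length x'" "Z (take k x')"
     and xy: "(x' = x \<and> y' = y) \<or> (x' = y \<and> y' = x)" for k x' y'
  proof -
    have "k \<le> length (label Z x')" using label_len_ge[of k x' Z] k by auto
    then have lx: "length p < length (label Z x')" using k by auto
    have "label Z x' = label Z y'" using eq xy by auto
    have "x' ! length p = label Z x' ! length p"
      using wx wy xy lx by (metis nth_append)
    moreover have "y' ! length p = label Z y' ! length p"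
      using wx wy xy lx \<open>label Z x' = label Z y'\<close> by (metis nth_append)
    ultimately have "x' ! length p = y' ! length p" using \<open>label Z x' = label Z y'\<close> by simp
    then show False using xy assms by auto
  qed
  show "(\<forall>k. length p < k \<and> k \<le> length x \<longrightarrow> \<not> Z (take k x)) \<and>
    (\<forall>k. length p < k \<and> k \<le> length y \<longrightarrow> \<not> Z (take k y))"
    using key by blast
qed



lemma finite_nodes: "finite (nodes D mu)"
  unfolding nodes_def using finite_lists_length_le[of "{0..<mu}" D] by (simp add: conj_commute)

lemma prob_bern_False: "0 \<le> r \<Longrightarrow> r \<le> 1 \<Longrightarrow> measure_pmf.prob (bernoulli_pmf r) {False} = 1 - r"
  by (simp add: measure_pmf_single)

lemma prob_Pi_avoid:
  assumes "finite S" "U \<subseteq> S" "\<And>u. u \<in> U \<Longrightarrow> 0 \<le> r u \<and> r u \<le> 1"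
  shows "measure_pmf.prob (Pi_pmf S False (\<lambda>u. bernoulli_pmf (r u))) {Z. \<forall>u\<in>U. \<not> Z u}
         = (\<Prod>u\<in>U. 1 - r u)"
proof -
  define B where "B u = (if u \<in> U then {False} else UNIV)" for u
  have "{Z. \<forall>u\<in>U. \<not> Z u} = Pi S B" using assms(2) by (auto simp: B_def Pi_def)
  then have "measure_pmf.prob (Pi_pmf S False (\<lambda>u. bernoulli_pmf (r u))) {Z. \<forall>u\<in>U. \<not> Z u}
     = (\<Prod>u\<in>S. measure_pmf.prob (bernoulli_pmf (r u)) (B u))"
    using assms(1) by (simp add: measure_Pi_pmf_Pi)
  also have "\<dots> = (\<Prod>u\<in>S. if u \<in> U then 1 - r u else 1)"
    using assms(3) by (intro prod.cong refl) (auto simp: B_def prob_bern_False)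
  also have "\<dots> = (\<Prod>u\<in>S \<inter> U. 1 - r u)"
    using assms(1) by (simp add: prod.inter_restrict)
  also have "S \<inter> U = U" using assms(2) by auto
  finally show ?thesis .
qed

lemma prob_Z_same:
  assumes rho: "\<And>d. d \<in> {1..D} \<Longrightarrow> 0 \<le> rho d \<and> rho d \<le> 1"
    and ij: "i \<noteq> j" and x: "x = p @ i # a" and y: "y = p @ j # b"
    and sx: "set x \<subseteq> {0..<mu}" and sy: "set y \<subseteq> {0..<mu}"
    and lx: "length x = D" and ly: "length y = D"
  shows "measure_pmf.prob (Z_pmf D mu rho) {Z. label Z x = label Z y}
       = (\<Prod>d\<in>{length p<..D}. (1 - rho d)^2)"
proof -
  define K where "K = {length p<..D}"
  define U where "U = (\<lambda>k. take k x) ` K \<union> (\<lambda>k. take k y) ` K"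
  have ev: "{Z. label Z x = label Z y} = {Z. \<forall>u\<in>U. \<not> Z u}"
    using label_eq_iff[OF ij x y] lx ly by (auto simp: U_def K_def)
  have sub: "U \<subseteq> nodes D mu - {[]}"
  proof
    fix u assume "u \<in> U"
    then obtain k z where "k \<in> K" "z = x \<or> z = y" "u = take k z" by (auto simp: U_def)
    moreover have "set (take k z) \<subseteq> set z" by (rule set_take_subset)
    ultimately show "u \<in> nodes D mu - {[]}" using sx sy lx ly
      by (auto simp: nodes_def K_def)
  qed
  have r: "0 \<le> rho (length u) \<and> rho (length u) \<le> 1" if "u \<in> U" for u
  proof -
    obtain k z where "k \<in> K" "z = x \<or> z = y" "u = take k z" using \<open>u \<in> U\<close> by (auto simp: U_def)
    then have "length u = k" "k \<in> {1..D}" using lx ly by (auto simp: K_def)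
    then show ?thesis using rho by auto
  qed
  have "measure_pmf.prob (Z_pmf D mu rho) {Z. label Z x = label Z y} = (\<Prod>u\<in>U. 1 - rho (length u))"
    unfolding Z_pmf_def ev using sub r finite_nodes
    by (intro prob_Pi_avoid) auto
  also have "\<dots> = (\<Prod>u\<in>(\<lambda>k. take k x) ` K. 1 - rho (length u)) * (\<Prod>u\<in>(\<lambda>k. take k y) ` K. 1 - rho (length u))"
    unfolding U_def
  proof (rule prod.union_disjoint)
    show "(\<lambda>k. take k x) ` K \<inter> (\<lambda>k. take k y) ` K = {}"
    proof (rule ccontr)
      assume "(\<lambda>k. take k x) ` K \<inter> (\<lambda>k. take k y) ` K \<noteq> {}"
      then obtain k k' where kk: "k \<in> K" "k' \<in> K" "take k x = take k' y" by blast
      then have "k = k'" using lx ly by (metis K_def greaterThanAtMost_iff length_take min.absorb2)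
      then have "take (Suc (length p)) (take k x) = take (Suc (length p)) (take k y)" using kk by simp
      then show False using kk ij x y by (simp add: K_def min_def split: if_splits)
    qed
  qed (auto simp: K_def)
  also have "(\<Prod>u\<in>(\<lambda>k. take k x) ` K. 1 - rho (length u)) = (\<Prod>k\<in>K. 1 - rho k)"
    using lx by (subst prod.reindex) (auto simp: inj_on_def K_def intro!: prod.cong dest!: arg_cong[where f=length])
  also have "(\<Prod>u\<in>(\<lambda>k. take k y) ` K. 1 - rho (length u)) = (\<Prod>k\<in>K. 1 - rho k)"
    using ly by (subst prod.reindex) (auto simp: inj_on_def K_def intro!: prod.cong dest!: arg_cong[where f=length])
  finally show ?thesis by (simp add: K_def power2_eq_square prod.distrib)
qed

lemma prob_W_tame:
  assumes "x \<noteq> y" "x \<in> leaves D mu" "y \<in> leaves D mu" "0 \<le> omega" "omega \<le> 1"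
  shows "measure_pmf.prob (W_pmf D mu omega) {W. \<not> W x \<and> \<not> W y} = (1 - omega)^2"
proof -
  have e: "{W. \<not> W x \<and> \<not> W y} = {W. \<forall>u\<in>{x,y}. \<not> W u}" by auto
  have "finite (leaves D mu)" using finite_nodes
    by (simp add: leaves_def level_def)
  then show ?thesis unfolding W_pmf_def e using assms
    by (subst prob_Pi_avoid) (auto simp: power2_eq_square)
qed



lemma exp_abs_le:
  fixes f :: "'a \<Rightarrow> real"
  assumes "\<And>x. \<bar>f x\<bar> \<le> B"
  shows "\<bar>measure_pmf.expectation M f\<bar> \<le> B"
proof -
  have B0: "0 \<le> B" using assms[of undefined] by linarith
  have "\<bar>measure_pmf.expectation M f\<bar> \<le> measure_pmf.expectation M (\<lambda>x. \<bar>f x\<bar>)"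
    using integral_abs_bound[of "measure_pmf M" f] by simp
  also have "\<dots> \<le> measure_pmf.expectation M (\<lambda>x. B)"
    using assms B0 by (intro integral_mono pmf_integrable_bdd[where B=B]) auto
  also have "\<dots> = B" by simp
  finally show ?thesis .
qed

lemma ulist_int:
  fixes h :: "nat list \<Rightarrow> real"
  assumes "\<And>w. \<bar>h w\<bar> \<le> B"
  shows "measure_pmf.expectation (ulist mu (Suc s)) h =
     measure_pmf.expectation (pmf_of_set {0..<mu}) (\<lambda>i. measure_pmf.expectation (ulist mu s) (\<lambda>w. h (i # w)))"
  by (simp only: ulist.simps, subst int_bind_bdd[where B=B]) (use assms in simp_all)

lemma int_pmf_of_set_range:
  "mu > 0 \<Longrightarrow> measure_pmf.expectation (pmf_of_set {0..<mu}) g = (\<Sum>i<mu. g i) / real mu"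
  by (subst integral_pmf_of_set) (auto simp: atLeast0LessThan)

lemma exp_const_on_supp:
  fixes f :: "'a \<Rightarrow> real"
  assumes "\<And>x. x \<in> set_pmf M \<Longrightarrow> f x = c"
  shows "measure_pmf.expectation M f = c"
proof -
  have "measure_pmf.expectation M f = measure_pmf.expectation M (\<lambda>_. c)"
    using assms by (intro integral_cong_AE) (auto simp: AE_measure_pmf_iff)
  then show ?thesis by simp
qed

lemma T_lemma:
  fixes phi :: "nat list \<Rightarrow> nat list \<Rightarrow> real" and a :: "nat \<Rightarrow> real"
  assumes mu: "mu > 0"
    and bd: "\<And>x y. \<bar>phi x y\<bar> \<le> 1"
    and diag: "\<And>x. phi x x = 0"
    and off: "\<And>p i j w1 w2. set p \<subseteq> {0..<mu} \<Longrightarrow> i < mu \<Longrightarrow> j < mu \<Longrightarrow> i \<noteq> j \<Longrightarrow>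
        set w1 \<subseteq> {0..<mu} \<Longrightarrow> set w2 \<subseteq> {0..<mu} \<Longrightarrow> length w1 = length w2 \<Longrightarrow>
        length p + Suc (length w1) = D \<Longrightarrow> phi (p @ i # w1) (p @ j # w2) = a (length w1)"
  shows "set v \<subseteq> {0..<mu} \<Longrightarrow> length v + s = D \<Longrightarrow>
    measure_pmf.expectation (ulist mu s) (\<lambda>w1. measure_pmf.expectation (ulist mu s) (\<lambda>w2. phi (v @ w1) (v @ w2)))
    = (real mu - 1) * (\<Sum>t<s. a t * real mu ^ t) / real mu ^ s"
proof (induction s arbitrary: v)
  case 0
  then show ?case by (simp add: diag)
next
  case (Suc s)
  define T where "T = (real mu - 1) * (\<Sum>t<s. a t * real mu ^ t) / real mu ^ s"
  define G where "G i j = measure_pmf.expectation (ulist mu s) (\<lambda>w1.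
      measure_pmf.expectation (ulist mu s) (\<lambda>w2. phi (v @ i # w1) (v @ j # w2)))" for i j
  have b1: "\<bar>measure_pmf.expectation M (\<lambda>w2. phi x (y w2))\<bar> \<le> 1" for M x y
    by (rule exp_abs_le) (simp add: bd)
  have b2: "\<bar>measure_pmf.expectation M (\<lambda>w1. measure_pmf.expectation M' (\<lambda>w2. phi (x w1) (y w2)))\<bar> \<le> 1"
    for M M' x y
    by (rule exp_abs_le, rule exp_abs_le) (simp add: bd)
  have "measure_pmf.expectation (ulist mu (Suc s)) (\<lambda>w1. measure_pmf.expectation (ulist mu (Suc s))
          (\<lambda>w2. phi (v @ w1) (v @ w2)))
      = measure_pmf.expectation (pmf_of_set {0..<mu}) (\<lambda>i. measure_pmf.expectation (ulist mu s) (\<lambda>w1.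
          measure_pmf.expectation (pmf_of_set {0..<mu}) (\<lambda>j. measure_pmf.expectation (ulist mu s)
          (\<lambda>w2. phi (v @ i # w1) (v @ j # w2)))))"
    by (subst ulist_int[where B=1], rule b1) (subst ulist_int[where B=1], simp add: bd, rule refl)
  also have "\<dots> = measure_pmf.expectation (pmf_of_set {0..<mu}) (\<lambda>i.
          measure_pmf.expectation (pmf_of_set {0..<mu}) (\<lambda>j. G i j))"
    unfolding G_def
  proof (intro Bochner_Integration.integral_cong refl)
    fix i
    show "measure_pmf.expectation (ulist mu s) (\<lambda>w1.
          measure_pmf.expectation (pmf_of_set {0..<mu}) (\<lambda>j. measure_pmf.expectation (ulist mu s)
          (\<lambda>w2. phi (v @ i # w1) (v @ j # w2)))) =
        measure_pmf.expectation (pmf_of_set {0..<mu}) (\<lambda>j. measure_pmf.expectation (ulist mu s)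
          (\<lambda>w1. measure_pmf.expectation (ulist mu s) (\<lambda>w2. phi (v @ i # w1) (v @ j # w2))))"
      by (rule int_swap[where B=1 and f="\<lambda>w1 j. measure_pmf.expectation (ulist mu s)
          (\<lambda>w2. phi (v @ i # w1) (v @ j # w2))"], rule b1)
  qed
  also have "\<dots> = (\<Sum>i<mu. (\<Sum>j<mu. G i j) / real mu) / real mu"
    using mu by (simp add: int_pmf_of_set_range sum_divide_distrib)
  also have "\<dots> = (\<Sum>i<mu. (T + (real mu - 1) * a s) / real mu) / real mu"
  proof (rule arg_cong[where f="\<lambda>x. x / real mu"], rule sum.cong[OF refl])
    fix i assume i: "i \<in> {..<mu}"
    have Gii: "G i i = T" unfolding G_def T_def
      using Suc.IH[of "v @ [i]"] Suc.prems i by auto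
    have Gij: "G i j = a s" if "j < mu" "j \<noteq> i" for j
      unfolding G_def
    proof (rule exp_const_on_supp, rule exp_const_on_supp)
      fix w1 w2 assume "w1 \<in> set_pmf (ulist mu s)" "w2 \<in> set_pmf (ulist mu s)"
      then have "length w1 = s \<and> set w1 \<subseteq> {0..<mu}" "length w2 = s \<and> set w2 \<subseteq> {0..<mu}"
        using set_ulist[OF mu] by auto
      then show "phi (v @ i # w1) (v @ j # w2) = a s"
        using off[of v i j w1 w2] Suc.prems i that by auto
    qed
    have "(\<Sum>j<mu. G i j) = (\<Sum>j<mu. a s + (if j = i then T - a s else 0))"
      using Gii Gij by (intro sum.cong refl) auto
    also have "\<dots> = real mu * a s + (T - a s)"
      using i by (simp add: sum.distrib)
    finally show "(\<Sum>j<mu. G i j) / real mu = (T + (real mu - 1) * a s) / real mu"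
      by (simp add: algebra_simps)
  qed
  also have "\<dots> = (real mu - 1) * (\<Sum>t<Suc s. a t * real mu ^ t) / real mu ^ Suc s"
    using mu unfolding T_def by (simp add: field_simps)
  finally show ?case .
qed



lemma set_attempts: "es \<in> set_pmf (attempts_pmf D mu nu q n) \<Longrightarrow> length es = n"
  by (induction n arbitrary: es) auto

lemma L1:
  "measure_pmf.expectation (attempts_pmf D mu nu q n) (\<lambda>es. real (length (filter P es)))
   = real n * measure_pmf.expectation (attempt_pmf D mu nu q) (\<lambda>a. of_bool (P a))"
proof (induction n)
  case 0
  then show ?case by simp
next
  case (Suc n)
  have bd: "\<bar>real (length (filter P es))\<bar> \<le> real (Suc n)"
    if "es \<in> set_pmf (attempts_pmf D mu nu q (Suc n))" for es
    using set_attempts[OF that] length_filter_le[of P es] by simp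
  have "measure_pmf.expectation (attempts_pmf D mu nu q (Suc n)) (\<lambda>es. real (length (filter P es)))
     = measure_pmf.expectation (attempt_pmf D mu nu q) (\<lambda>a.
         measure_pmf.expectation (attempts_pmf D mu nu q n) (\<lambda>es. real (length (filter P (a # es)))))"
    by (simp only: attempts_pmf.simps, subst int_bind_bdd[where B="real (Suc n)"])
       (use bd in simp_all)
  also have "\<dots> = measure_pmf.expectation (attempt_pmf D mu nu q) (\<lambda>a.
         of_bool (P a) + measure_pmf.expectation (attempts_pmf D mu nu q n) (\<lambda>es. real (length (filter P es))))"
  proof (intro Bochner_Integration.integral_cong refl)
    fix a
    have int: "integrable (measure_pmf (attempts_pmf D mu nu q n)) (\<lambda>es. real (length (filter P es)))"
      by (rule pmf_integrable_bdd[where B="real n"])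
         (use set_attempts length_filter_le in \<open>fastforce\<close>)
    have "measure_pmf.expectation (attempts_pmf D mu nu q n) (\<lambda>es. real (length (filter P (a # es))))
       = measure_pmf.expectation (attempts_pmf D mu nu q n) (\<lambda>es. of_bool (P a) + real (length (filter P es)))"
      by (intro Bochner_Integration.integral_cong refl) simp
    also have "\<dots> = of_bool (P a) + measure_pmf.expectation (attempts_pmf D mu nu q n) (\<lambda>es. real (length (filter P es)))"
      using int by (subst Bochner_Integration.integral_add) auto
    finally show "measure_pmf.expectation (attempts_pmf D mu nu q n) (\<lambda>es. real (length (filter P (a # es))))
       = of_bool (P a) + measure_pmf.expectation (attempts_pmf D mu nu q n) (\<lambda>es. real (length (filter P es)))" .
  qed
  also have "\<dots> = measure_pmf.expectation (attempt_pmf D mu nu q) (\<lambda>a. of_bool (P a))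
       + real n * measure_pmf.expectation (attempt_pmf D mu nu q) (\<lambda>a. of_bool (P a))"
    unfolding Suc.IH
    by (subst Bochner_Integration.integral_add) (auto intro: pmf_integrable_bdd[where B=1])
  finally show ?case by (simp add: algebra_simps)
qed

definition cntAC :: "(nat list \<Rightarrow> bool) \<Rightarrow> (nat list \<Rightarrow> bool) \<Rightarrow> (nat list \<times> nat list) list \<Rightarrow> nat \<times> nat" where
  "cntAC Z W es = (length (filter (is_agreement Z) es), length (filter (is_conflict Z W) es))"

lemma exp_of_bool_bd: "\<bar>measure_pmf.expectation M (\<lambda>x. of_bool (P x) :: real)\<bar> \<le> 1"
  by (rule exp_abs_le) simp

lemma fixed_n_gen:
  fixes proj :: "nat \<times> nat \<Rightarrow> nat" and R :: "(nat list \<Rightarrow> bool) \<Rightarrow> (nat list \<Rightarrow> bool) \<Rightarrow> nat list \<times> nat list \<Rightarrow> bool"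
  assumes pr: "\<And>Z W es. proj (cntAC Z W es) = length (filter (R Z W) es)"
  shows "measure_pmf.expectation
      (bind_pmf (Z_pmf D mu rho) (\<lambda>Z. bind_pmf (W_pmf D mu omega) (\<lambda>W.
         map_pmf (cntAC Z W) (attempts_pmf D mu nu q n)))) (\<lambda>m. real (proj m))
    = real n * measure_pmf.expectation (attempt_pmf D mu nu q) (\<lambda>a.
        measure_pmf.expectation (Z_pmf D mu rho) (\<lambda>Z.
        measure_pmf.expectation (W_pmf D mu omega) (\<lambda>W. of_bool (R Z W a))))"
proof -
  have bd: "\<bar>real (proj (cntAC Z W es))\<bar> \<le> real n" if "es \<in> set_pmf (attempts_pmf D mu nu q n)" for es Z W
    using pr[of Z W es] set_attempts[OF that] length_filter_le[of "R Z W" es] by simp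
  have "measure_pmf.expectation
      (bind_pmf (Z_pmf D mu rho) (\<lambda>Z. bind_pmf (W_pmf D mu omega) (\<lambda>W.
         map_pmf (cntAC Z W) (attempts_pmf D mu nu q n)))) (\<lambda>m. real (proj m))
     = measure_pmf.expectation (Z_pmf D mu rho) (\<lambda>Z. measure_pmf.expectation (W_pmf D mu omega) (\<lambda>W.
         measure_pmf.expectation (attempts_pmf D mu nu q n) (\<lambda>es. real (length (filter (R Z W) es)))))"
    apply (subst int_bind_bdd[where B="real n"])
     apply (use bd in fastforce)[1]
    apply (intro Bochner_Integration.integral_cong refl)
    apply (subst int_bind_bdd[where B="real n"])
     apply (use bd in fastforce)[1]
    apply (simp add: pr)
    done
  also have "\<dots> = measure_pmf.expectation (Z_pmf D mu rho) (\<lambda>Z. measure_pmf.expectation (W_pmf D mu omega) (\<lambda>W.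
         real n * measure_pmf.expectation (attempt_pmf D mu nu q) (\<lambda>a. of_bool (R Z W a))))"
    by (simp only: L1)
  also have "\<dots> = real n * measure_pmf.expectation (Z_pmf D mu rho) (\<lambda>Z. measure_pmf.expectation (W_pmf D mu omega) (\<lambda>W.
         measure_pmf.expectation (attempt_pmf D mu nu q) (\<lambda>a. of_bool (R Z W a))))"
    by simp
  also have "measure_pmf.expectation (Z_pmf D mu rho) (\<lambda>Z. measure_pmf.expectation (W_pmf D mu omega) (\<lambda>W.
         measure_pmf.expectation (attempt_pmf D mu nu q) (\<lambda>a. of_bool (R Z W a) :: real)))
      = measure_pmf.expectation (Z_pmf D mu rho) (\<lambda>Z. measure_pmf.expectation (attempt_pmf D mu nu q) (\<lambda>a.
         measure_pmf.expectation (W_pmf D mu omega) (\<lambda>W. of_bool (R Z W a))))"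
  proof (intro Bochner_Integration.integral_cong refl)
    fix Z
    show "measure_pmf.expectation (W_pmf D mu omega) (\<lambda>W.
         measure_pmf.expectation (attempt_pmf D mu nu q) (\<lambda>a. of_bool (R Z W a) :: real)) =
         measure_pmf.expectation (attempt_pmf D mu nu q) (\<lambda>a.
         measure_pmf.expectation (W_pmf D mu omega) (\<lambda>W. of_bool (R Z W a)))"
      by (rule int_swap[where B=1 and f="\<lambda>W a. of_bool (R Z W a)"]) simp
  qed
  also have "\<dots> = measure_pmf.expectation (attempt_pmf D mu nu q) (\<lambda>a.
        measure_pmf.expectation (Z_pmf D mu rho) (\<lambda>Z.
        measure_pmf.expectation (W_pmf D mu omega) (\<lambda>W. of_bool (R Z W a))))"
    by (rule int_swap[where B=1]) (rule exp_of_bool_bd)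
  finally show ?thesis .
qed

lemma N_level:
  fixes F :: "nat \<Rightarrow> 'a pmf" and f :: "'a \<Rightarrow> real"
  assumes nn: "\<And>m. 0 \<le> f m" and bd: "\<And>n m. m \<in> set_pmf (F n) \<Longrightarrow> f m \<le> real n"
    and ex: "\<And>n. measure_pmf.expectation (F n) f = real n * c" and c: "0 \<le> c"
    and intN: "integrable (measure_pmf N) real"
  shows "measure_pmf.expectation (bind_pmf N F) f = c * measure_pmf.expectation N real"
proof -
  have inner: "(\<integral>\<^sup>+ m. ennreal (f m) \<partial>measure_pmf (F n)) = ennreal (real n * c)" for n
  proof -
    have "integrable (measure_pmf (F n)) f"
      by (rule pmf_integrable_bdd[where B="real n"]) (use nn bd in \<open>auto simp: abs_of_nonneg\<close>)
    then show ?thesis using nn ex by (subst nn_integral_eq_integral) auto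
  qed
  have intc: "integrable (measure_pmf N) (\<lambda>n. real n * c)"
    using intN by (intro integrable_mult_left) 
  have "(\<integral>\<^sup>+ m. ennreal (f m) \<partial>measure_pmf (bind_pmf N F)) = (\<integral>\<^sup>+ n. ennreal (real n * c) \<partial>measure_pmf N)"
    by (simp add: inner)
  also have "\<dots> = ennreal (measure_pmf.expectation N (\<lambda>n. real n * c))"
    using intc c by (subst nn_integral_eq_integral) auto
  finally have e: "(\<integral>\<^sup>+ m. ennreal (f m) \<partial>measure_pmf (bind_pmf N F)) = ennreal (measure_pmf.expectation N (\<lambda>n. real n * c))" .
  have "measure_pmf.expectation (bind_pmf N F) f = enn2real (\<integral>\<^sup>+ m. ennreal (f m) \<partial>measure_pmf (bind_pmf N F))"
    using nn by (subst integral_eq_nn_integral) auto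
  also have "\<dots> = measure_pmf.expectation N (\<lambda>n. real n * c)"
    unfolding e using c by (subst enn2real_ennreal) (auto intro!: integral_nonneg)
  also have "\<dots> = c * measure_pmf.expectation N real" by simp
  finally show ?thesis .
qed



lemma int_bind1:
  fixes f :: "'b \<Rightarrow> real"
  assumes "\<And>y. \<bar>f y\<bar> \<le> 1"
  shows "measure_pmf.expectation (bind_pmf M N) f =
         measure_pmf.expectation M (\<lambda>x. measure_pmf.expectation (N x) f)"
  by (rule int_bind_bdd[where B=1]) (rule assms)

lemma att_exp:
  fixes phi :: "nat list \<Rightarrow> nat list \<Rightarrow> real" and a :: "nat \<Rightarrow> real"
  assumes mu: "mu > 0" and nu: "nu > 0"
    and qn: "\<And>s. s \<in> {1..D} \<Longrightarrow> 0 \<le> q s" and qs: "(\<Sum>s = 1..D. q s) = 1"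
    and bd: "\<And>x y. \<bar>phi x y\<bar> \<le> 1"
    and diag: "\<And>x. phi x x = 0"
    and off: "\<And>p i j w1 w2. set p \<subseteq> {0..<mu} \<Longrightarrow> i < mu \<Longrightarrow> j < mu \<Longrightarrow> i \<noteq> j \<Longrightarrow>
        set w1 \<subseteq> {0..<mu} \<Longrightarrow> set w2 \<subseteq> {0..<mu} \<Longrightarrow> length w1 = length w2 \<Longrightarrow>
        length p + Suc (length w1) = D \<Longrightarrow> phi (p @ i # w1) (p @ j # w2) = a (length w1)"
  shows "measure_pmf.expectation (attempt_pmf D mu nu q) (\<lambda>e. phi (fst e) (snd e))
       = (\<Sum>s\<in>{1..D}. q s * ((real mu - 1) * (\<Sum>t<s. a t * real mu ^ t) / real mu ^ s))"
proof -
  define T where "T s = (real mu - 1) * (\<Sum>t<s. a t * real mu ^ t) / real mu ^ s" for s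
  have "measure_pmf.expectation (attempt_pmf D mu nu q) (\<lambda>e. phi (fst e) (snd e))
     = measure_pmf.expectation (height_pmf D q) (\<lambda>s.
         measure_pmf.expectation (start_pmf D mu nu s) (\<lambda>v.
         measure_pmf.expectation (walk_pmf D mu nu v) (\<lambda>x.
         measure_pmf.expectation (walk_pmf D mu nu v) (\<lambda>y. phi x y))))"
    unfolding attempt_pmf_def by (simp add: int_bind1 bd)
  also have "\<dots> = measure_pmf.expectation (height_pmf D q) (\<lambda>s. if s \<in> {1..D} then T s else 0)"
  proof (intro integral_cong_AE)
    have hs: "s \<in> {1..D}" if "s \<in> set_pmf (height_pmf D q)" for s
      using that height_pmf_pmf[OF qn qs, of s] by (auto simp: set_pmf_iff split: if_splits)
    show "AE s in measure_pmf (height_pmf D q).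
       measure_pmf.expectation (start_pmf D mu nu s) (\<lambda>v.
         measure_pmf.expectation (walk_pmf D mu nu v) (\<lambda>x.
         measure_pmf.expectation (walk_pmf D mu nu v) (\<lambda>y. phi x y)))
       = (if s \<in> {1..D} then T s else 0)"
    proof (unfold AE_measure_pmf_iff, intro ballI)
      fix s assume "s \<in> set_pmf (height_pmf D q)"
      then have s: "s \<in> {1..D}" by (rule hs)
      have lev: "level D mu (D - s) = {w. set w \<subseteq> {0..<mu} \<and> length w = D - s}"
        by (auto simp: level_def nodes_def)
      have "finite (level D mu (D - s))" unfolding lev by (simp add: finite_lists_length_eq)
      moreover have "level D mu (D - s) \<noteq> {}"
      proof -
        have "replicate (D - s) 0 \<in> level D mu (D - s)" unfolding lev using mu by auto
        then show ?thesis by blast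
      qed
      ultimately have sup: "set_pmf (start_pmf D mu nu s) = level D mu (D - s)"
        using start_pmf_eq[OF mu nu, of s] s by simp
      show "measure_pmf.expectation (start_pmf D mu nu s) (\<lambda>v.
         measure_pmf.expectation (walk_pmf D mu nu v) (\<lambda>x.
         measure_pmf.expectation (walk_pmf D mu nu v) (\<lambda>y. phi x y)))
       = (if s \<in> {1..D} then T s else 0)"
      proof (rule exp_const_on_supp)
        fix v assume "v \<in> set_pmf (start_pmf D mu nu s)"
        then have v: "set v \<subseteq> {0..<mu}" "length v = D - s" using sup lev by auto
        have w: "walk_pmf D mu nu v = map_pmf (\<lambda>w. v @ w) (ulist mu s)"
          unfolding walk_pmf_def using v s walk_steps_eq[OF mu nu, of v "D - length v" D] by auto
        have "measure_pmf.expectation (walk_pmf D mu nu v) (\<lambda>x.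
              measure_pmf.expectation (walk_pmf D mu nu v) (\<lambda>y. phi x y))
            = measure_pmf.expectation (ulist mu s) (\<lambda>w1.
              measure_pmf.expectation (ulist mu s) (\<lambda>w2. phi (v @ w1) (v @ w2)))"
          unfolding w by simp
        also have "\<dots> = T s"
          unfolding T_def using v s by (intro T_lemma[where phi=phi and a=a and D=D, OF mu bd diag off]) auto
        finally show "measure_pmf.expectation (walk_pmf D mu nu v) (\<lambda>x.
              measure_pmf.expectation (walk_pmf D mu nu v) (\<lambda>y. phi x y))
            = (if s \<in> {1..D} then T s else 0)" using s by simp
      qed
    qed
  qed simp_all
  also have "\<dots> = (\<Sum>s\<in>{1..D}. (if s \<in> {1..D} then T s else 0) * pmf (height_pmf D q) s)"
    by (rule integral_measure_pmf_real) (auto split: if_splits)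
  also have "\<dots> = (\<Sum>s\<in>{1..D}. q s * T s)"
    by (intro sum.cong refl) (subst height_pmf_pmf[OF qn qs], auto)
  finally show ?thesis unfolding T_def .
qed



lemma exp_not:
  "measure_pmf.expectation M (\<lambda>x. of_bool (\<not> P x) :: real) = 1 - measure_pmf.prob M {x. P x}"
proof -
  have "measure_pmf.expectation M (\<lambda>x. of_bool (\<not> P x) :: real)
      = measure_pmf.expectation M (\<lambda>x. 1 - of_bool (P x))"
    by (intro Bochner_Integration.integral_cong refl) auto
  also have "\<dots> = 1 - measure_pmf.expectation M (\<lambda>x. of_bool (P x))"
    by (subst Bochner_Integration.integral_diff) (auto intro: pmf_integrable_bdd[where B=1])
  finally show ?thesis by (simp add: exp_of_bool)
qed

definition phiA where
  "phiA D mu rho omega x y = measure_pmf.expectation (Z_pmf D mu rho) (\<lambda>Z.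
     measure_pmf.expectation (W_pmf D mu omega) (\<lambda>W. of_bool (is_agreement Z (x, y)) :: real))"

definition phiC where
  "phiC D mu rho omega x y = measure_pmf.expectation (Z_pmf D mu rho) (\<lambda>Z.
     measure_pmf.expectation (W_pmf D mu omega) (\<lambda>W. of_bool (is_conflict Z W (x, y)) :: real))"

lemma phiA_bd: "\<bar>phiA D mu rho omega x y\<bar> \<le> 1"
  unfolding phiA_def by (rule exp_abs_le, rule exp_abs_le) simp

lemma phiC_bd: "\<bar>phiC D mu rho omega x y\<bar> \<le> 1"
  unfolding phiC_def by (rule exp_abs_le, rule exp_abs_le) simp

lemma phiA_diag: "phiA D mu rho omega x x = 0"
  unfolding phiA_def by (simp add: is_agreement_def)

lemma phiC_diag: "phiC D mu rho omega x x = 0"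
  unfolding phiC_def by (simp add: is_conflict_def)

lemma pair_facts:
  assumes "set p \<subseteq> {0..<mu}" "i < mu" "j < mu" "i \<noteq> j" "set w1 \<subseteq> {0..<mu}" "set w2 \<subseteq> {0..<mu}"
    "length w1 = length w2" "length p + Suc (length w1) = D"
  shows "p @ i # w1 \<noteq> p @ j # w2" "set (p @ i # w1) \<subseteq> {0..<mu}" "set (p @ j # w2) \<subseteq> {0..<mu}"
    "length (p @ i # w1) = D" "length (p @ j # w2) = D"
    "p @ i # w1 \<in> leaves D mu" "p @ j # w2 \<in> leaves D mu"
    "{length p<..D} = {D - length w1..D}"
  using assms by (auto simp: leaves_def level_def nodes_def)

lemma phiA_off:
  assumes rho: "\<And>d. d \<in> {1..D} \<Longrightarrow> 0 \<le> rho d \<and> rho d \<le> 1"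
    and h: "set p \<subseteq> {0..<mu}" "i < mu" "j < mu" "i \<noteq> j" "set w1 \<subseteq> {0..<mu}" "set w2 \<subseteq> {0..<mu}"
    "length w1 = length w2" "length p + Suc (length w1) = D"
  shows "phiA D mu rho omega (p @ i # w1) (p @ j # w2) = A_coef D rho (length w1)"
proof -
  note pf = pair_facts[OF h]
  have "phiA D mu rho omega (p @ i # w1) (p @ j # w2) = measure_pmf.expectation (Z_pmf D mu rho)
      (\<lambda>Z. of_bool (label Z (p @ i # w1) = label Z (p @ j # w2)))"
    unfolding phiA_def using pf(1) by (simp add: is_agreement_def)
  also have "\<dots> = (\<Prod>d\<in>{length p<..D}. (1 - rho d)^2)"
    by (subst exp_of_bool, rule prob_Z_same[OF rho h(4) refl refl]) (use pf in auto)
  also have "\<dots> = A_coef D rho (length w1)"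
    unfolding A_coef_def pf(8) ..
  finally show ?thesis .
qed

lemma phiC_off:
  assumes rho: "\<And>d. d \<in> {1..D} \<Longrightarrow> 0 \<le> rho d \<and> rho d \<le> 1"
    and om: "0 \<le> omega" "omega \<le> 1"
    and h: "set p \<subseteq> {0..<mu}" "i < mu" "j < mu" "i \<noteq> j" "set w1 \<subseteq> {0..<mu}" "set w2 \<subseteq> {0..<mu}"
    "length w1 = length w2" "length p + Suc (length w1) = D"
  shows "phiC D mu rho omega (p @ i # w1) (p @ j # w2) = C_coef D rho omega (length w1)"
proof -
  note pf = pair_facts[OF h]
  define x where "x = p @ i # w1"
  define y where "y = p @ j # w2"
  have W: "measure_pmf.expectation (W_pmf D mu omega) (\<lambda>W. of_bool (W x \<or> W y) :: real)
      = omega * (2 - omega)"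
  proof -
    have "measure_pmf.expectation (W_pmf D mu omega) (\<lambda>W. of_bool (W x \<or> W y) :: real)
       = measure_pmf.expectation (W_pmf D mu omega) (\<lambda>W. of_bool (\<not> (\<not> W x \<and> \<not> W y)) :: real)"
      by simp
    also have "\<dots> = 1 - (1 - omega)^2"
      unfolding exp_not using prob_W_tame[OF pf(1) pf(6) pf(7) om] by (simp add: x_def y_def)
    finally show ?thesis by (simp add: power2_eq_square algebra_simps)
  qed
  have "phiC D mu rho omega x y = measure_pmf.expectation (Z_pmf D mu rho)
      (\<lambda>Z. of_bool (label Z x \<noteq> label Z y) *
        measure_pmf.expectation (W_pmf D mu omega) (\<lambda>W. of_bool (W x \<or> W y)))"
    unfolding phiC_def is_conflict_def
    by (intro Bochner_Integration.integral_cong refl) (simp flip: integral_mult_right_zero)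
  also have "\<dots> = measure_pmf.expectation (Z_pmf D mu rho)
      (\<lambda>Z. of_bool (\<not> (label Z x = label Z y))) * (omega * (2 - omega))"
    unfolding W by simp
  also have "\<dots> = (1 - A_coef D rho (length w1)) * (omega * (2 - omega))"
    unfolding exp_not
    by (subst prob_Z_same[OF rho h(4) x_def y_def]) (use pf in \<open>auto simp: x_def y_def A_coef_def\<close>)
  finally show ?thesis by (simp add: x_def y_def C_coef_def)
qed



lemma final_alg:
  fixes a q :: "nat \<Rightarrow> real"
  assumes mu: "mu > 0"
  shows "(\<Sum>s\<in>{1..D}. q s * ((real mu - 1) * (\<Sum>t<s. a t * real mu ^ t) / real mu ^ s)) * (nu * real mu ^ D / 2)
    = nu * real mu ^ D * (real mu - 1) / 2 *
             (\<Sum>s = 1..D. q s * real mu powi (- int s) * (\<Sum>t = 0..s - 1. a t * real mu ^ t))"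
proof -
  have "(\<Sum>s = 1..D. q s * real mu powi (- int s) * (\<Sum>t = 0..s - 1. a t * real mu ^ t))
      = (\<Sum>s\<in>{1..D}. q s * ((\<Sum>t<s. a t * real mu ^ t) / real mu ^ s))"
  proof (intro sum.cong refl)
    fix s :: nat assume "s \<in> {1..D}"
    then have "{0..s - 1} = {..<s}" by auto
    moreover have "real mu powi (- int s) = inverse (real mu ^ s)"
      by (simp add: power_int_minus)
    ultimately show "q s * real mu powi (- int s) * (\<Sum>t = 0..s - 1. a t * real mu ^ t)
       = q s * ((\<Sum>t<s. a t * real mu ^ t) / real mu ^ s)"
      by (simp add: divide_inverse)
  qed
  moreover have "(\<Sum>s\<in>{1..D}. q s * ((real mu - 1) * (\<Sum>t<s. a t * real mu ^ t) / real mu ^ s))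
     = (real mu - 1) * (\<Sum>s\<in>{1..D}. q s * ((\<Sum>t<s. a t * real mu ^ t) / real mu ^ s))"
    by (subst sum_distrib_left) (intro sum.cong refl, simp)
  moreover have "\<And>Y::real. (real mu - 1) * Y * (nu * real mu ^ D / 2) = nu * real mu ^ D * (real mu - 1) / 2 * Y"
    by (simp add: algebra_simps)
  ultimately show ?thesis by metis
qed

lemma edge_eq: "edge_experiment D mu nu rho omega q N =
   bind_pmf N (\<lambda>n. bind_pmf (Z_pmf D mu rho) (\<lambda>Z. bind_pmf (W_pmf D mu omega) (\<lambda>W.
         map_pmf (cntAC Z W) (attempts_pmf D mu nu q n))))"
  unfolding edge_experiment_def cntAC_def[abs_def] ..

lemma setF:
  assumes "m \<in> set_pmf (bind_pmf (Z_pmf D mu rho) (\<lambda>Z. bind_pmf (W_pmf D mu omega) (\<lambda>W.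
         map_pmf (cntAC Z W) (attempts_pmf D mu nu q n))))"
  shows "fst m \<le> n \<and> snd m \<le> n"
proof -
  obtain Z W es where "es \<in> set_pmf (attempts_pmf D mu nu q n)" "m = cntAC Z W es"
    using assms by auto
  then show ?thesis using set_attempts length_filter_le
    by (fastforce simp: cntAC_def)
qed

theorem corollary6p6:
  fixes mu D :: nat and nu omega :: real and rho q :: "nat \<Rightarrow> real" and N :: "nat pmf"
  assumes "mu \<ge> 2" and "D \<ge> 1" and "nu > 0"
    and "\<And>d. d \<in> {1..D} \<Longrightarrow> 0 \<le> rho d \<and> rho d \<le> 1"
    and "0 \<le> omega" and "omega \<le> 1"
    and "\<And>s. s \<in> {1..D} \<Longrightarrow> 0 \<le> q s" and "(\<Sum>s = 1..D. q s) = 1"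
    and "integrable (measure_pmf N) real"
    and "measure_pmf.expectation N real = nu * real mu ^ D / 2"
  shows "measure_pmf.expectation (edge_experiment D mu nu rho omega q N) (\<lambda>m. real (fst m))
           = nu * real mu ^ D * (real mu - 1) / 2 *
             (\<Sum>s = 1..D. q s * real mu powi (- int s) *
                (\<Sum>t = 0..s - 1. A_coef D rho t * real mu ^ t))
         \<and> measure_pmf.expectation (edge_experiment D mu nu rho omega q N) (\<lambda>m. real (snd m))
           = nu * real mu ^ D * (real mu - 1) / 2 *
             (\<Sum>s = 1..D. q s * real mu powi (- int s) *
                (\<Sum>t = 0..s - 1. C_coef D rho omega t * real mu ^ t))"
proof -
  have mu: "mu > 0" using assms(1) by simp
  note nu = assms(3) and rho = assms(4) and om = assms(5,6) and qn = assms(7) and qs = assms(8)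
  define F where "F n = bind_pmf (Z_pmf D mu rho) (\<lambda>Z. bind_pmf (W_pmf D mu omega) (\<lambda>W.
         map_pmf (cntAC Z W) (attempts_pmf D mu nu q n)))" for n
  define cA where "cA = measure_pmf.expectation (attempt_pmf D mu nu q) (\<lambda>a.
        measure_pmf.expectation (Z_pmf D mu rho) (\<lambda>Z.
        measure_pmf.expectation (W_pmf D mu omega) (\<lambda>W. of_bool (is_agreement Z a) :: real)))"
  define cC where "cC = measure_pmf.expectation (attempt_pmf D mu nu q) (\<lambda>a.
        measure_pmf.expectation (Z_pmf D mu rho) (\<lambda>Z.
        measure_pmf.expectation (W_pmf D mu omega) (\<lambda>W. of_bool (is_conflict Z W a) :: real)))"
  have cA_eq: "cA = (\<Sum>s\<in>{1..D}. q s * ((real mu - 1) * (\<Sum>t<s. A_coef D rho t * real mu ^ t) / real mu ^ s))"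
  proof -
    have "cA = measure_pmf.expectation (attempt_pmf D mu nu q) (\<lambda>e. phiA D mu rho omega (fst e) (snd e))"
      unfolding cA_def phiA_def by simp
    also have "\<dots> = (\<Sum>s\<in>{1..D}. q s * ((real mu - 1) * (\<Sum>t<s. A_coef D rho t * real mu ^ t) / real mu ^ s))"
      by (rule att_exp[where phi="phiA D mu rho omega" and a="A_coef D rho"], fact mu, fact nu, erule qn,
          fact qs, rule phiA_bd, rule phiA_diag, rule phiA_off, erule rho, assumption+)
    finally show ?thesis .
  qed
  have offC: "phiC D mu rho omega (p @ i # w1) (p @ j # w2) = C_coef D rho omega (length w1)"
    if "set p \<subseteq> {0..<mu}" "i < mu" "j < mu" "i \<noteq> j" "set w1 \<subseteq> {0..<mu}" "set w2 \<subseteq> {0..<mu}"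
    "length w1 = length w2" "length p + Suc (length w1) = D" for p i j w1 w2
    by (rule phiC_off) (use rho om that in auto)
  have cC_eq: "cC = (\<Sum>s\<in>{1..D}. q s * ((real mu - 1) * (\<Sum>t<s. C_coef D rho omega t * real mu ^ t) / real mu ^ s))"
  proof -
    have "cC = measure_pmf.expectation (attempt_pmf D mu nu q) (\<lambda>e. phiC D mu rho omega (fst e) (snd e))"
      unfolding cC_def phiC_def by simp
    also have "\<dots> = (\<Sum>s\<in>{1..D}. q s * ((real mu - 1) * (\<Sum>t<s. C_coef D rho omega t * real mu ^ t) / real mu ^ s))"
      by (rule att_exp[where phi="phiC D mu rho omega" and a="C_coef D rho omega"], fact mu, fact nu, erule qn,
          fact qs, rule phiC_bd, rule phiC_diag, rule offC, assumption+)
    finally show ?thesis .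
  qed
  have cA_nn: "0 \<le> cA" unfolding cA_def by (intro Bochner_Integration.integral_nonneg) auto
  have cC_nn: "0 \<le> cC" unfolding cC_def by (intro Bochner_Integration.integral_nonneg) auto
  have exA: "measure_pmf.expectation (F n) (\<lambda>m. real (fst m)) = real n * cA" for n
    unfolding F_def cA_def
    by (rule fixed_n_gen[where R="\<lambda>Z W. is_agreement Z"]) (simp add: cntAC_def)
  have exC: "measure_pmf.expectation (F n) (\<lambda>m. real (snd m)) = real n * cC" for n
    unfolding F_def cC_def
    by (rule fixed_n_gen[where R="\<lambda>Z W. is_conflict Z W"]) (simp add: cntAC_def)
  have bdF: "fst m \<le> n \<and> snd m \<le> n" if "m \<in> set_pmf (F n)" for m n
    using that unfolding F_def by (rule setF)
  have E: "edge_experiment D mu nu rho omega q N = bind_pmf N F"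
    unfolding edge_eq F_def ..
  have A: "measure_pmf.expectation (edge_experiment D mu nu rho omega q N) (\<lambda>m. real (fst m))
      = cA * (nu * real mu ^ D / 2)"
    unfolding E assms(10)[symmetric]
    by (rule N_level[OF _ _ exA cA_nn assms(9)]) (use bdF in force)+
  have C: "measure_pmf.expectation (edge_experiment D mu nu rho omega q N) (\<lambda>m. real (snd m))
      = cC * (nu * real mu ^ D / 2)"
    unfolding E assms(10)[symmetric]
    by (rule N_level[OF _ _ exC cC_nn assms(9)]) (use bdF in force)+
  show ?thesis
    unfolding A C cA_eq cC_eq using final_alg[OF mu] by simp
qed

end
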